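(* Let $p,q,n$ be positive integers, $\boldsymbol\Lambda$ a real $p\times q$ matrix, $\boldsymbol\Gamma$ a real $p\times p$ matrix with $\boldsymbol\Gamma\boldsymbol\Gamma'=\mathbf I_p-\boldsymbol\Lambda\boldsymbol\Lambda'$, $\mathbf Y,\hat{\mathbf Y}$ real $q\times n$ matrices and $\hat{\mathbf W}$ a real $p\times n$ matrix. For $t\in(0,1)$ set $\mathbf Y(t)=\sqrt t\,\mathbf Y+\sqrt{1-t}\,\hat{\mathbf Y}$, $\mathbf X(t)=\boldsymbol\Lambda\mathbf Y(t)+\boldsymbol\Gamma\hat{\mathbf W}$, and assume $\mathbf X(t)\mathbf X(t)'$ and $\mathbf Y(t)\mathbf Y(t)'$ are invertible. Let $\mathbf Q(t)=(\mathbf X(t)\mathbf X(t)')^{-1}\mathbf X(t)$, $\mathbf U(t)=(\mathbf Y(t)\mathbf Y(t)')^{-1}\mathbf Y(t)$, $\mathbf P_{x(t)}=\mathbf X(t)'\mathbf Q(t)$, $\mathbf P_{y(t)}=\mathbf Y(t)'\mathbf U(t)$, $\mathbf H(t)=\mathbf P_{x(t)}+\mathbf P_{y(t)}$, and for $z\in\mathbb C^+$ let $G=(\mathbf H(t)-z)^{-1}$. For $j\in\{1,\dots,q\}$, $i\in\{1,\dots,n\}$ define $$\Psi^1_{ji}=[\boldsymbol\Lambda'\mathbf Q(t)G^2(\mathbf I-\mathbf P_{x(t)})]_{ji},\qquad \Psi^2_{ji}=[\mathbf U(t)G^2(\mathbf I-\mathbf P_{y(t)})]_{ji},$$ viewed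 as functions of the entries of $\mathbf Y$ and $\hat{\mathbf Y}$. Then for $l=1,2$, $$\frac{1}{\sqrt{1-t}}\frac{\partial\Psi^l_{ji}}{\partial\hat Y_{ji}}=\frac{1}{\sqrt t}\frac{\partial\Psi^l_{ji}}{\partial Y_{ji}}.$$
   Context: In the paper this is used with $\mathbf Y$ having i.i.d. (scaled) entries of mean $0$, variance $1$, finite fourth moment, and $\hat{\mathbf Y},\hat{\mathbf W}$ independent with (scaled) standard Gaussian entries; the identity itself is pointwise. $\mathbf A'$ denotes transpose. *)

theory Defs
  imports "HOL-Analysis.Analysis"
begin

text \<open>Matrices are rendered as Cartesian types: a real p x q matrix is
  real^'q^'p (rows indexed by 'p). Transpose is transpose, product is **.\<close>

definition cmat :: "real^'n^'m \<Rightarrow> complex^'n^'m" where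
  "cmat A = (\<chi> i j. complex_of_real (A $ i $ j))"

definition Yt :: "real \<Rightarrow> real^'n^'q \<Rightarrow> real^'n^'q \<Rightarrow> real^'n^'q" where
  "Yt t Y Yh = sqrt t *\<^sub>R Y + sqrt (1 - t) *\<^sub>R Yh"

definition Xt :: "real^'q^'p \<Rightarrow> real^'p^'p \<Rightarrow> real \<Rightarrow> real^'n^'q \<Rightarrow> real^'n^'q
    \<Rightarrow> real^'n^'p \<Rightarrow> real^'n^'p" where
  "Xt Lam Gam t Y Yh Wh = Lam ** Yt t Y Yh + Gam ** Wh"

definition Qmat :: "real^'n^'p \<Rightarrow> real^'n^'p" where
  "Qmat X = matrix_inv (X ** transpose X) ** X"

definition Pmat :: "real^'n^'p \<Rightarrow> real^'n^'n" where
  "Pmat X = transpose X ** Qmat X"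

definition Gres :: "real^'n^'p \<Rightarrow> real^'n^'q \<Rightarrow> complex \<Rightarrow> complex^'n^'n" where
  "Gres X Y z = matrix_inv (cmat (Pmat X + Pmat Y) - mat z)"

definition Psi1 :: "real^'q^'p \<Rightarrow> real^'p^'p \<Rightarrow> real \<Rightarrow> complex \<Rightarrow> real^'n^'q \<Rightarrow> real^'n^'q
    \<Rightarrow> real^'n^'p \<Rightarrow> complex^'n^'q" where
  "Psi1 Lam Gam t z Y Yh Wh =
     (let X = Xt Lam Gam t Y Yh Wh; G = Gres X (Yt t Y Yh) z in
      cmat (transpose Lam ** Qmat X) ** (G ** G) ** cmat (mat 1 - Pmat X))"

definition Psi2 :: "real^'q^'p \<Rightarrow> real^'p^'p \<Rightarrow> real \<Rightarrow> complex \<Rightarrow> real^'n^'q \<Rightarrow> real^'n^'q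
    \<Rightarrow> real^'n^'p \<Rightarrow> complex^'n^'q" where
  "Psi2 Lam Gam t z Y Yh Wh =
     (let X = Xt Lam Gam t Y Yh Wh; Y' = Yt t Y Yh; G = Gres X Y' z in
      cmat (Qmat Y') ** (G ** G) ** cmat (mat 1 - Pmat Y'))"

definition upd_entry :: "real^'n^'q \<Rightarrow> 'q \<Rightarrow> 'n \<Rightarrow> real \<Rightarrow> real^'n^'q" where
  "upd_entry A j i s = (\<chi> a b. if a = j \<and> b = i then s else A $ a $ b)"

end

theory Submission
  imports Defs
begin

definition mdiff :: "(real \<Rightarrow> 'a::real_normed_field^'n^'m) \<Rightarrow> real \<Rightarrow> bool" where
  "mdiff M x \<longleftrightarrow> (\<forall>a b. (\<lambda>s. M s $ a $ b) differentiable (at x))"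

lemma mdiff_const: "mdiff (\<lambda>s. C) x" by (simp add: mdiff_def)

lemma mdiff_add: "mdiff A x \<Longrightarrow> mdiff B x \<Longrightarrow> mdiff (\<lambda>s. A s + B s) x"
  by (simp add: mdiff_def)

lemma mdiff_diff: "mdiff A x \<Longrightarrow> mdiff B x \<Longrightarrow> mdiff (\<lambda>s. A s - B s) x"
  by (simp add: mdiff_def)

lemma mdiff_mul: "mdiff A x \<Longrightarrow> mdiff B x \<Longrightarrow> mdiff (\<lambda>s. A s ** B s) x"
  unfolding mdiff_def matrix_matrix_mult_def
  by (auto intro!: differentiable_sum differentiable_mult)

lemma mdiff_transpose: "mdiff A x \<Longrightarrow> mdiff (\<lambda>s. transpose (A s)) x"
  by (simp add: mdiff_def transpose_def)

lemma mdiff_cmat: "mdiff A x \<Longrightarrow> mdiff (\<lambda>s. cmat (A s)) x"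
  unfolding mdiff_def cmat_def differentiable_def
  using has_derivative_of_real by fastforce

lemma mdiff_upd: "mdiff (\<lambda>s. upd_entry A j i s) x"
  unfolding mdiff_def upd_entry_def
proof (intro allI)
  fix a b show "(\<lambda>s. (\<chi> a b. if a = j \<and> b = i then s else A $ a $ b) $ a $ b) differentiable at x"
    by (cases "a = j \<and> b = i") (auto simp: differentiable_ident)
qed

lemma differentiable_prod':
  fixes f :: "'i \<Rightarrow> real \<Rightarrow> 'a::real_normed_field"
  shows "finite S \<Longrightarrow> (\<forall>k\<in>S. f k differentiable (at x)) \<Longrightarrow> (\<lambda>s. \<Prod>k\<in>S. f k s) differentiable (at x)"
  by (induction S rule: finite_induct) auto

lemma det_diff:
  fixes M :: "real \<Rightarrow> 'a::real_normed_field^'n^'n"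
  assumes "mdiff M x" shows "(\<lambda>s. det (M s)) differentiable (at x)"
  unfolding det_def
  using assms unfolding mdiff_def
  by (auto intro!: differentiable_sum differentiable_mult differentiable_prod')

lemma matrix_inv_props:
  fixes A :: "'a::field^'n^'n"
  assumes "invertible A" shows "A ** matrix_inv A = mat 1" "matrix_inv A ** A = mat 1"
  using someI_ex[OF assms[unfolded invertible_def]] unfolding matrix_inv_def by auto

lemma matrix_inv_cramer:
  fixes A :: "'a::field^'n^'n"
  assumes "det A \<noteq> 0"
  shows "matrix_inv A $ k $ l = det (\<chi> a b. if b = k then (if a = l then 1 else 0) else A$a$b) / det A"
proof -
  have inv: "invertible A" using assms invertible_det_nz by blast
  let ?e = "axis l (1::'a)"
  let ?x = "matrix_inv A *v ?e"
  have "A *v ?x = ?e"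
    by (simp add: matrix_vector_mul_assoc matrix_inv_props(1)[OF inv])
  then have "?x = (\<chi> k. det(\<chi> i j. if j=k then ?e$i else A$i$j) / det A)"
    using cramer[OF assms] by blast
  then have "?x $ k = det(\<chi> i j. if j=k then ?e$i else A$i$j) / det A" by simp
  moreover have "?x $ k = matrix_inv A $ k $ l"
    by (simp add: matrix_vector_mult_def axis_def if_distrib cong: if_cong)
  moreover have "(\<chi> i j. if j=k then ?e$i else A$i$j) = (\<chi> a b. if b = k then (if a = l then 1 else 0) else A$a$b)"
    by (simp add: vec_eq_iff axis_def)
  ultimately show ?thesis by simp
qed

lemma mdiff_inv:
  fixes M :: "real \<Rightarrow> 'a::real_normed_field^'n^'n"
  assumes M: "mdiff M x" and d: "det (M x) \<noteq> 0"
  shows "mdiff (\<lambda>s. matrix_inv (M s)) x"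
  unfolding mdiff_def
proof (intro allI)
  fix k l
  let ?N = "\<lambda>s. (\<chi> a b. if b = k then (if a = l then 1 else 0) else M s $a$b) :: 'a^'n^'n"
  have Nd: "mdiff ?N x"
    unfolding mdiff_def
  proof (intro allI)
    fix a b show "(\<lambda>s. ?N s $ a $ b) differentiable at x"
      using M unfolding mdiff_def by (cases "b = k"; cases "a = l") auto
  qed
  have dd: "(\<lambda>s. det (M s)) differentiable (at x)" by (rule det_diff[OF M])
  have f: "(\<lambda>s. det (?N s) / det (M s)) differentiable (at x)"
    using det_diff[OF Nd] dd d by (auto intro!: differentiable_divide)
  have "continuous (at x) (\<lambda>s. det (M s))"
    using dd differentiable_imp_continuous_within by blast
  then obtain e where e: "e > 0" "\<And>y. dist y x < e \<Longrightarrow> det (M y) \<noteq> 0"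
    using continuous_at_avoid[of x "\<lambda>s. det (M s)" 0] d by (auto simp: dist_commute)
  show "(\<lambda>s. matrix_inv (M s) $ k $ l) differentiable at x"
    apply (rule differentiable_transform_within[OF f e(1)])
     apply simp
    using e(2) matrix_inv_cramer[of "M _"] by simp
qed

lemma herm_det_nz:
  fixes H :: "real^'n^'n" and z :: complex
  assumes sym: "transpose H = H" and z: "Im z > 0"
  shows "det (cmat H - mat z) \<noteq> 0"
proof
  let ?A = "cmat H - mat z"
  assume "det ?A = 0"
  then have "\<not> inj ((*v) ?A)"
    using det_nz_iff_inj_gen[OF matrix_vector_mul_linear_gen, of ?A]
    by (simp add: matrix_of_matrix_vector_mul)
  then obtain u w where uw: "u \<noteq> w" "?A *v u = ?A *v w" unfolding inj_def by blast
  define v where "v = u - w"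
  have v0: "v \<noteq> 0" using uw by (simp add: v_def)
  have Av: "?A *v v = 0" using uw by (simp add: v_def matrix_vector_mult_diff_distrib)
  have row: "(\<Sum>l\<in>UNIV. complex_of_real (H$k$l) * v$l) = z * v$k" for k
  proof -
    have "(?A *v v) $ k = 0" using Av by simp
    moreover have "(?A *v v) $ k = (cmat H *v v) $ k - (mat z *v v) $ k"
      by (simp add: matrix_vector_mult_diff_rdistrib)
    moreover have "(mat z *v v) $ k = z * v$k"
      by (simp add: matrix_vector_mult_def mat_def if_distrib[where f="\<lambda>x. x * _"] cong: if_cong)
    moreover have "(cmat H *v v) $ k = (\<Sum>l\<in>UNIV. complex_of_real (H$k$l) * v$l)"
      by (simp add: matrix_vector_mult_def cmat_def)
    ultimately show ?thesis by simp
  qed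
  define S where "S = (\<Sum>k\<in>UNIV. cnj (v$k) * (\<Sum>l\<in>UNIV. complex_of_real (H$k$l) * v$l))"
  have S1: "S = z * (\<Sum>k\<in>UNIV. cnj (v$k) * v$k)"
    unfolding S_def row by (simp add: sum_distrib_left mult_ac)
  have Hs: "H$k$l = H$l$k" for k l
    using arg_cong[OF sym, of "\<lambda>M. M$l$k"] by (simp add: transpose_def)
  have "cnj S = (\<Sum>k\<in>UNIV. \<Sum>l\<in>UNIV. v$k * complex_of_real (H$k$l) * cnj (v$l))"
    unfolding S_def by (simp add: sum_distrib_left mult_ac)
  also have "\<dots> = (\<Sum>l\<in>UNIV. \<Sum>k\<in>UNIV. v$k * complex_of_real (H$k$l) * cnj (v$l))"
    by (rule sum.swap)
  also have "\<dots> = S"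
    unfolding S_def by (simp add: sum_distrib_left mult_ac Hs)
  finally have "Im (cnj S) = Im S" by simp
  then have "Im S = 0" by simp
  define N where "N = (\<Sum>k\<in>UNIV. (cmod (v$k))^2)"
  have NN: "(\<Sum>k\<in>UNIV. cnj (v$k) * v$k) = complex_of_real N"
    unfolding N_def by (simp only: of_real_sum complex_norm_square mult.commute)
  have "N > 0"
  proof -
    obtain k where "v$k \<noteq> 0" using v0 by (metis vec_eq_iff zero_index)
    then have "(cmod (v$k))^2 > 0" by simp
    moreover have "(cmod (v$k))^2 \<le> N" unfolding N_def
      by (rule member_le_sum) auto
    ultimately show ?thesis by linarith
  qed
  have "Im S = Im z * N" unfolding S1 NN by simp
  with \<open>Im S = 0\<close> \<open>N > 0\<close> z show False by simp
qed

lemma matrix_inv_unique: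
  fixes A :: "'a::field^'n^'n"
  assumes "A ** B = mat 1" "B ** A = mat 1"
  shows "matrix_inv A = B"
proof -
  have inv: "invertible A" using assms unfolding invertible_def by blast
  have "matrix_inv A = matrix_inv A ** (A ** B)" using assms by simp
  also have "\<dots> = (matrix_inv A ** A) ** B" by (simp add: matrix_mul_assoc)
  also have "\<dots> = B" using matrix_inv_props(2)[OF inv] by simp
  finally show ?thesis .
qed

lemma transpose_add': "transpose (A + B) = transpose A + transpose (B::'a::semiring_1^'n^'m)"
  by (simp add: transpose_def vec_eq_iff)

lemma Pmat_sym:
  fixes X :: "real^'n^'p"
  assumes "det (X ** transpose X) \<noteq> 0"
  shows "transpose (Pmat X) = Pmat X"
proof -
  let ?M = "X ** transpose X"
  have inv: "invertible ?M" using assms invertible_det_nz by blast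
  have tM: "transpose ?M = ?M" by (simp add: matrix_transpose_mul)
  have "?M ** transpose (matrix_inv ?M) = mat 1"
    using arg_cong[OF matrix_inv_props(2)[OF inv], of transpose]
    by (simp add: matrix_transpose_mul tM)
  moreover have "transpose (matrix_inv ?M) ** ?M = mat 1"
    using arg_cong[OF matrix_inv_props(1)[OF inv], of transpose]
    by (simp add: matrix_transpose_mul tM)
  ultimately have ti: "transpose (matrix_inv ?M) = matrix_inv ?M"
    using matrix_inv_unique by metis
  show ?thesis
    unfolding Pmat_def Qmat_def
    by (simp add: matrix_transpose_mul ti matrix_mul_assoc)
qed

lemma mdiff_Q:
  fixes X :: "real \<Rightarrow> real^'n^'p"
  assumes "mdiff X x" "det (X x ** transpose (X x)) \<noteq> 0"
  shows "mdiff (\<lambda>s. Qmat (X s)) x" "mdiff (\<lambda>s. Pmat (X s)) x"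
proof -
  show q: "mdiff (\<lambda>s. Qmat (X s)) x"
    unfolding Qmat_def
    by (intro mdiff_mul mdiff_inv mdiff_transpose assms)
  show "mdiff (\<lambda>s. Pmat (X s)) x"
    unfolding Pmat_def
    by (intro mdiff_mul q mdiff_transpose assms)
qed

definition Phi1 where
  "Phi1 Lam Gam z Wh Ym =
     (let X = Lam ** Ym + Gam ** Wh; G = Gres X Ym z in
      cmat (transpose Lam ** Qmat X) ** (G ** G) ** cmat (mat 1 - Pmat X))"

definition Phi2 where
  "Phi2 Lam Gam z Wh Ym =
     (let X = Lam ** Ym + Gam ** Wh; G = Gres X Ym z in
      cmat (Qmat Ym) ** (G ** G) ** cmat (mat 1 - Pmat Ym))"

lemma mdiff_Phi:
  fixes M :: "real \<Rightarrow> real^'n^'q" and Lam :: "real^'q^'p" and Gam :: "real^'p^'p"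
    and Wh :: "real^'n^'p"
  assumes M: "mdiff M x"
    and dX: "det ((Lam ** M x + Gam ** Wh) ** transpose (Lam ** M x + Gam ** Wh)) \<noteq> 0"
    and dY: "det (M x ** transpose (M x)) \<noteq> 0"
    and z: "Im z > 0"
  shows "mdiff (\<lambda>s. Phi1 Lam Gam z Wh (M s)) x" "mdiff (\<lambda>s. Phi2 Lam Gam z Wh (M s)) x"
proof -
  let ?X = "\<lambda>s. Lam ** M s + Gam ** Wh"
  have X: "mdiff ?X x" by (intro mdiff_add mdiff_mul mdiff_const M)
  note QX = mdiff_Q[OF X dX] and QY = mdiff_Q[OF M dY]
  have H: "transpose (Pmat (?X x) + Pmat (M x)) = Pmat (?X x) + Pmat (M x)"
    using Pmat_sym[OF dX] Pmat_sym[OF dY] by (simp add: transpose_add')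
  have G: "mdiff (\<lambda>s. Gres (?X s) (M s) z) x"
    unfolding Gres_def
    by (intro mdiff_inv mdiff_diff mdiff_cmat mdiff_add mdiff_const QX QY herm_det_nz[OF H z])
  show "mdiff (\<lambda>s. Phi1 Lam Gam z Wh (M s)) x"
    unfolding Phi1_def Let_def
    by (intro mdiff_mul mdiff_cmat mdiff_diff mdiff_const QX QY G mdiff_transpose)
  show "mdiff (\<lambda>s. Phi2 Lam Gam z Wh (M s)) x"
    unfolding Phi2_def Let_def
    by (intro mdiff_mul mdiff_cmat mdiff_diff mdiff_const QX QY G mdiff_transpose)
qed

lemma chain_aff:
  fixes g :: "real \<Rightarrow> complex"
  assumes "g differentiable (at u0)" "c \<noteq> 0" "a + c * x1 = u0"
  shows "(1 / c) *\<^sub>R vector_derivative (\<lambda>s. g (a + c * s)) (at x1) = vector_derivative g (at u0)"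
proof -
  have gd: "(g has_vector_derivative vector_derivative g (at u0)) (at (a + c * x1))"
    using assms(1,3) vector_derivative_works by blast
  have ad: "((\<lambda>s. a + c * s) has_vector_derivative c) (at x1)"
    by (auto intro!: derivative_eq_intros)
  have hd: "((g \<circ> (\<lambda>s. a + c * s)) has_vector_derivative (c *\<^sub>R vector_derivative g (at u0))) (at x1)"
    by (rule vector_diff_chain_at[OF ad gd])
  have "vector_derivative (\<lambda>s. g (a + c * s)) (at x1) = c *\<^sub>R vector_derivative g (at u0)"
    using vector_derivative_at[OF hd] by (simp add: comp_def)
  then show ?thesis using assms(2) by simp
qed

lemma upd_self: "upd_entry A j i (A $ j $ i) = A"
  by (simp add: upd_entry_def vec_eq_iff)

lemma Yt_upd1: "Yt t Y (upd_entry Yh j i s) = upd_entry (Yt t Y Yh) j i (sqrt t * Y$j$i + sqrt (1 - t) * s)"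
  by (simp add: Yt_def upd_entry_def vec_eq_iff)

lemma Yt_upd2: "Yt t (upd_entry Y j i s) Yh = upd_entry (Yt t Y Yh) j i (sqrt (1 - t) * Yh$j$i + sqrt t * s)"
  by (simp add: Yt_def upd_entry_def vec_eq_iff)

lemma Psi_Phi:
  "Psi1 Lam Gam t z Ya Yb Wh = Phi1 Lam Gam z Wh (Yt t Ya Yb)"
  "Psi2 Lam Gam t z Ya Yb Wh = Phi2 Lam Gam z Wh (Yt t Ya Yb)"
  by (simp_all add: Psi1_def Phi1_def Psi2_def Phi2_def Xt_def Let_def)

lemma both_sides:
  fixes Phi :: "real^'n^'q \<Rightarrow> complex^'n^'q"
  assumes "mdiff (\<lambda>u. Phi (upd_entry (Yt t Y Yh) j i u)) (Yt t Y Yh $ j $ i)"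
    and "0 < t" "t < 1"
  shows "(1 / sqrt (1 - t)) *\<^sub>R
        vector_derivative (\<lambda>s. Phi (Yt t Y (upd_entry Yh j i s)) $ j $ i) (at (Yh $ j $ i))
   = (1 / sqrt t) *\<^sub>R
        vector_derivative (\<lambda>s. Phi (Yt t (upd_entry Y j i s) Yh) $ j $ i) (at (Y $ j $ i))"
proof -
  let ?Y0 = "Yt t Y Yh"
  let ?g = "\<lambda>u. Phi (upd_entry ?Y0 j i u) $ j $ i"
  have gd: "?g differentiable (at (?Y0 $ j $ i))" using assms(1) unfolding mdiff_def by blast
  have u0: "?Y0 $ j $ i = sqrt t * Y$j$i + sqrt (1 - t) * Yh$j$i" by (simp add: Yt_def)
  have "(1 / sqrt (1 - t)) *\<^sub>R vector_derivative (\<lambda>s. ?g (sqrt t * Y$j$i + sqrt (1 - t) * s)) (at (Yh $ j $ i))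
        = vector_derivative ?g (at (?Y0 $ j $ i))"
    by (rule chain_aff[OF gd]) (use assms in \<open>auto simp: u0\<close>)
  moreover have "(1 / sqrt t) *\<^sub>R vector_derivative (\<lambda>s. ?g (sqrt (1 - t) * Yh$j$i + sqrt t * s)) (at (Y $ j $ i))
        = vector_derivative ?g (at (?Y0 $ j $ i))"
    by (rule chain_aff[OF gd]) (use assms in \<open>auto simp: u0\<close>)
  ultimately show ?thesis by (simp add: Yt_upd1 Yt_upd2)
qed

theorem lemma6p4:
  fixes Lam :: "real^'q^'p" and Gam :: "real^'p^'p"
    and Y Yh :: "real^'n^'q" and Wh :: "real^'n^'p"
    and t :: real and z :: complex and j :: 'q and i :: 'n
  assumes "Gam ** transpose Gam = mat 1 - Lam ** transpose Lam"
    and "0 < t" and "t < 1"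
    and "invertible (Xt Lam Gam t Y Yh Wh ** transpose (Xt Lam Gam t Y Yh Wh))"
    and "invertible (Yt t Y Yh ** transpose (Yt t Y Yh))"
    and "Im z > 0"
  shows "(\<forall>Psi \<in> {Psi1 Lam Gam t z, Psi2 Lam Gam t z}.
     (1 / sqrt (1 - t)) *\<^sub>R
        vector_derivative (\<lambda>s. Psi Y (upd_entry Yh j i s) Wh $ j $ i) (at (Yh $ j $ i))
   = (1 / sqrt t) *\<^sub>R
        vector_derivative (\<lambda>s. Psi (upd_entry Y j i s) Yh Wh $ j $ i) (at (Y $ j $ i)))"
proof -
  let ?Y0 = "Yt t Y Yh"
  let ?M = "\<lambda>u. upd_entry ?Y0 j i u"
  let ?x = "?Y0 $ j $ i"
  have M: "mdiff ?M ?x" by (rule mdiff_upd)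
  have Mx: "?M ?x = ?Y0" by (rule upd_self)
  have dX: "det ((Lam ** ?M ?x + Gam ** Wh) ** transpose (Lam ** ?M ?x + Gam ** Wh)) \<noteq> 0"
    using assms(4) unfolding Mx Xt_def invertible_det_nz .
  have dY: "det (?M ?x ** transpose (?M ?x)) \<noteq> 0"
    using assms(5) unfolding Mx invertible_det_nz .
  note md = mdiff_Phi[OF M dX dY assms(6)]
  show ?thesis
    using both_sides[OF md(1) assms(2,3)] both_sides[OF md(2) assms(2,3)]
    by (simp add: Psi_Phi)
qed

end
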